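(* Let the setting be as in the context. Let $A\in\mathcal L(\mathcal H)$ with $A\ge0$ be such that $A\ast B\in L^1(\Xi)$ for every $B\in\mathcal T^1(\mathcal H)$ with $B\ge0$. Then $A\in\mathcal T^1(\mathcal H)$.
   Context: $\Xi$ is a locally compact abelian group; $m:\Xi\times\Xi\to S^1$ separately continuous with $m(x+y,z)m(x,y)=m(x,y+z)m(y,z)$, $m(x,0)=m(0,x)=1$, $m(x,y)=m(-x,-y)$, Heisenberg ($x\mapsto\sigma(x,\cdot)$ with $\sigma(x,y)=m(x,y)/m(y,x)$ a topological isomorphism $\Xi\to\widehat\Xi$). $(U_x)$ is the irreducible strongly continuous square integrable projective unitary representation on $\mathcal H$ with $U_xU_y=m(x,y)U_{x+y}$; Haar measure normalized so that $\int_\Xi\langle U_x\varphi_1,\psi_1\rangle\overline{\langle U_x\varphi_2,\psi_2\rangle}dx=\langle\varphi_1,\varphi_2\rangle\overline{\langle\psi_1,\psi_2\rangle}$. $R$ is a self-adjoint unitary with $U_xR=RU_{-x}$. $\alpha_x(A)=U_xAU_x^*$, $\beta_-(A)=RAR$, and for $B\in\mathcal T^1(\mathcal H)$, $A\in\mathcal L(\mathcal H)$: $A\ast B(x)=B\ast A(x)=\operatorname{tr}(B\,\alpha_x(\beta_-(A)))$. *)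

theory Defs
  imports "HOL-Analysis.Analysis"
begin

text \<open>Complex Hilbert space on a type 'h, given by a scalar multiplication smul and an
  inner product ip (linear in the first argument, conjugate-linear in the second).\<close>

definition hnorm :: "('h \<Rightarrow> 'h \<Rightarrow> complex) \<Rightarrow> 'h \<Rightarrow> real" where
  "hnorm ip x = sqrt (Re (ip x x))"

definition hilbert_space :: "(complex \<Rightarrow> 'h::ab_group_add \<Rightarrow> 'h) \<Rightarrow> ('h \<Rightarrow> 'h \<Rightarrow> complex) \<Rightarrow> bool" where
  "hilbert_space smul ip \<longleftrightarrow>
     (\<forall>x. smul 1 x = x) \<and>
     (\<forall>a b x. smul a (smul b x) = smul (a * b) x) \<and>
     (\<forall>a b x. smul (a + b) x = smul a x + smul b x) \<and>
     (\<forall>a x y. smul a (x + y) = smul a x + smul a y) \<and>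
     (\<forall>x y z. ip (x + y) z = ip x z + ip y z) \<and>
     (\<forall>a x y. ip (smul a x) y = a * ip x y) \<and>
     (\<forall>x y. ip y x = cnj (ip x y)) \<and>
     (\<forall>x. Im (ip x x) = 0 \<and> Re (ip x x) \<ge> 0) \<and>
     (\<forall>x. ip x x = 0 \<longrightarrow> x = 0) \<and>
     (\<forall>s::nat \<Rightarrow> 'h. (\<forall>e>0. \<exists>N. \<forall>m\<ge>N. \<forall>n\<ge>N. hnorm ip (s m - s n) < e)
        \<longrightarrow> (\<exists>l. (\<lambda>n. hnorm ip (s n - l)) \<longlonglongrightarrow> 0))"

definition bounded_op :: "(complex \<Rightarrow> 'h::ab_group_add \<Rightarrow> 'h) \<Rightarrow> ('h \<Rightarrow> 'h \<Rightarrow> complex) \<Rightarrow> ('h \<Rightarrow> 'h) \<Rightarrow> bool" where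
  "bounded_op smul ip T \<longleftrightarrow>
     (\<forall>x y. T (x + y) = T x + T y) \<and> (\<forall>a x. T (smul a x) = smul a (T x)) \<and>
     (\<exists>C. \<forall>x. hnorm ip (T x) \<le> C * hnorm ip x)"

definition adj :: "('h \<Rightarrow> 'h \<Rightarrow> complex) \<Rightarrow> ('h \<Rightarrow> 'h) \<Rightarrow> ('h \<Rightarrow> 'h)" where
  "adj ip T = (SOME S. \<forall>x y. ip (T x) y = ip x (S y))"

definition unitary_op :: "(complex \<Rightarrow> 'h::ab_group_add \<Rightarrow> 'h) \<Rightarrow> ('h \<Rightarrow> 'h \<Rightarrow> complex) \<Rightarrow> ('h \<Rightarrow> 'h) \<Rightarrow> bool" where
  "unitary_op smul ip T \<longleftrightarrow> bounded_op smul ip T \<and> surj T \<and> (\<forall>x y. ip (T x) (T y) = ip x y)"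

definition selfadjoint_op :: "(complex \<Rightarrow> 'h::ab_group_add \<Rightarrow> 'h) \<Rightarrow> ('h \<Rightarrow> 'h \<Rightarrow> complex) \<Rightarrow> ('h \<Rightarrow> 'h) \<Rightarrow> bool" where
  "selfadjoint_op smul ip T \<longleftrightarrow> bounded_op smul ip T \<and> (\<forall>x y. ip (T x) y = ip x (T y))"

definition positive_op :: "(complex \<Rightarrow> 'h::ab_group_add \<Rightarrow> 'h) \<Rightarrow> ('h \<Rightarrow> 'h \<Rightarrow> complex) \<Rightarrow> ('h \<Rightarrow> 'h) \<Rightarrow> bool" where
  "positive_op smul ip T \<longleftrightarrow> bounded_op smul ip T \<and> (\<forall>x. Im (ip (T x) x) = 0 \<and> Re (ip (T x) x) \<ge> 0)"

definition abs_op :: "(complex \<Rightarrow> 'h::ab_group_add \<Rightarrow> 'h) \<Rightarrow> ('h \<Rightarrow> 'h \<Rightarrow> complex) \<Rightarrow> ('h \<Rightarrow> 'h) \<Rightarrow> ('h \<Rightarrow> 'h)" where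
  "abs_op smul ip T = (THE P. positive_op smul ip P \<and> P \<circ> P = adj ip T \<circ> T)"

definition onb :: "('h::ab_group_add \<Rightarrow> 'h \<Rightarrow> complex) \<Rightarrow> 'h set \<Rightarrow> bool" where
  "onb ip E \<longleftrightarrow> (\<forall>e\<in>E. ip e e = 1) \<and> (\<forall>e\<in>E. \<forall>f\<in>E. e \<noteq> f \<longrightarrow> ip e f = 0) \<and>
     (\<forall>x. (\<forall>e\<in>E. ip x e = 0) \<longrightarrow> x = 0)"

definition trace_class :: "(complex \<Rightarrow> 'h::ab_group_add \<Rightarrow> 'h) \<Rightarrow> ('h \<Rightarrow> 'h \<Rightarrow> complex) \<Rightarrow> ('h \<Rightarrow> 'h) \<Rightarrow> bool" where
  "trace_class smul ip T \<longleftrightarrow> bounded_op smul ip T \<and>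
     (\<exists>E. onb ip E \<and> (\<lambda>e. Re (ip (abs_op smul ip T e) e)) summable_on E)"

definition trace :: "('h::ab_group_add \<Rightarrow> 'h \<Rightarrow> complex) \<Rightarrow> ('h \<Rightarrow> 'h) \<Rightarrow> complex" where
  "trace ip T = (let E = (SOME E. onb ip E) in infsum (\<lambda>e. ip (T e) e) E)"

definition sympl :: "('x \<Rightarrow> 'x \<Rightarrow> complex) \<Rightarrow> 'x \<Rightarrow> 'x \<Rightarrow> complex" where
  "sympl m x y = m x y / m y x"

definition character :: "('x::topological_ab_group_add \<Rightarrow> complex) \<Rightarrow> bool" where
  "character ch \<longleftrightarrow> continuous_on UNIV ch \<and> (\<forall>x. norm (ch x) = 1) \<and>
     (\<forall>x y. ch (x + y) = ch x * ch y)"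

definition multiplier :: "('x::topological_ab_group_add \<Rightarrow> 'x \<Rightarrow> complex) \<Rightarrow> bool" where
  "multiplier m \<longleftrightarrow> (\<forall>x y. norm (m x y) = 1) \<and>
     (\<forall>x. continuous_on UNIV (m x)) \<and> (\<forall>y. continuous_on UNIV (\<lambda>x. m x y)) \<and>
     (\<forall>x y z. m (x + y) z * m x y = m x (y + z) * m y z) \<and>
     (\<forall>x. m x 0 = 1 \<and> m 0 x = 1) \<and> (\<forall>x y. m x y = m (-x) (-y))"

text \<open>Heisenberg: x \<mapsto> sigma(x,.) is a topological isomorphism onto the dual group
  (with its compact-open topology).\<close>
definition heisenberg :: "('x::topological_ab_group_add \<Rightarrow> 'x \<Rightarrow> complex) \<Rightarrow> bool" where
  "heisenberg m \<longleftrightarrow>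
     (\<forall>x. character (sympl m x)) \<and>
     (\<forall>x y. sympl m (x + y) = (\<lambda>z. sympl m x z * sympl m y z)) \<and>
     (\<forall>ch. character ch \<longrightarrow> (\<exists>!x. sympl m x = ch)) \<and>
     (\<forall>x0 K e. compact K \<and> e > 0 \<longrightarrow>
        (\<forall>\<^sub>F x in nhds x0. \<forall>y\<in>K. norm (sympl m x y - sympl m x0 y) < e)) \<and>
     (\<forall>x0 V. open V \<and> x0 \<in> V \<longrightarrow> (\<exists>K e. compact K \<and> e > 0 \<and>
        (\<forall>x. (\<forall>y\<in>K. norm (sympl m x y - sympl m x0 y) < e) \<longrightarrow> x \<in> V)))"

definition haar_measure :: "'x::topological_ab_group_add measure \<Rightarrow> bool" where
  "haar_measure M \<longleftrightarrow> sets M = sets borel \<and>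
     (\<forall>a. \<forall>S\<in>sets M. emeasure M ((\<lambda>x. a + x) ` S) = emeasure M S) \<and>
     (\<forall>K. compact K \<longrightarrow> emeasure M K < \<infinity>) \<and>
     (\<forall>V. open V \<and> V \<noteq> {} \<longrightarrow> emeasure M V > 0) \<and>
     (\<forall>S\<in>sets M. emeasure M S = (INF V\<in>{V. open V \<and> S \<subseteq> V}. emeasure M V)) \<and>
     (\<forall>V. open V \<longrightarrow> emeasure M V = (SUP K\<in>{K. compact K \<and> K \<subseteq> V}. emeasure M K))"

definition closed_subspace :: "(complex \<Rightarrow> 'h::ab_group_add \<Rightarrow> 'h) \<Rightarrow> ('h \<Rightarrow> 'h \<Rightarrow> complex) \<Rightarrow> 'h set \<Rightarrow> bool" where
  "closed_subspace smul ip S \<longleftrightarrow> 0 \<in> S \<and> (\<forall>x\<in>S. \<forall>y\<in>S. x + y \<in> S) \<and> (\<forall>a. \<forall>x\<in>S. smul a x \<in> S) \<and>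
     (\<forall>s l. (\<forall>n. s n \<in> S) \<and> (\<lambda>n. hnorm ip (s n - l)) \<longlonglongrightarrow> 0 \<longrightarrow> l \<in> S)"

definition heis_setting ::
  "(complex \<Rightarrow> 'h::ab_group_add \<Rightarrow> 'h) \<Rightarrow> ('h \<Rightarrow> 'h \<Rightarrow> complex) \<Rightarrow>
   ('x::{topological_ab_group_add,t2_space} \<Rightarrow> 'x \<Rightarrow> complex) \<Rightarrow> ('x \<Rightarrow> 'h \<Rightarrow> 'h) \<Rightarrow> ('h \<Rightarrow> 'h) \<Rightarrow>
   'x measure \<Rightarrow> bool" where
  "heis_setting smul ip m U R M \<longleftrightarrow>
     hilbert_space smul ip \<and>
     locally_compact_space (euclidean :: 'x topology) \<and>
     multiplier m \<and> heisenberg m \<and>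
     (\<forall>x. unitary_op smul ip (U x)) \<and>
     (\<forall>x y. U x \<circ> U y = (\<lambda>v. smul (m x y) (U (x + y) v))) \<and>
     (\<forall>x0 v e. e > 0 \<longrightarrow> (\<forall>\<^sub>F x in nhds x0. hnorm ip (U x v - U x0 v) < e)) \<and>
     (\<forall>S. closed_subspace smul ip S \<and> (\<forall>x. U x ` S \<subseteq> S) \<longrightarrow> S = {0} \<or> S = UNIV) \<and>
     haar_measure M \<and>
     (\<forall>\<phi>1 \<psi>1 \<phi>2 \<psi>2.
        integrable M (\<lambda>x. ip (U x \<phi>1) \<psi>1 * cnj (ip (U x \<phi>2) \<psi>2)) \<and>
        (\<integral>x. ip (U x \<phi>1) \<psi>1 * cnj (ip (U x \<phi>2) \<psi>2) \<partial>M) = ip \<phi>1 \<phi>2 * cnj (ip \<psi>1 \<psi>2)) \<and>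
     unitary_op smul ip R \<and> selfadjoint_op smul ip R \<and>
     (\<forall>x. U x \<circ> R = R \<circ> U (-x))"

text \<open>Operator convolution A * B (x) = tr (B alpha_x (beta_- A)).\<close>
definition op_conv ::
  "('h::ab_group_add \<Rightarrow> 'h \<Rightarrow> complex) \<Rightarrow> ('x \<Rightarrow> 'h \<Rightarrow> 'h) \<Rightarrow> ('h \<Rightarrow> 'h) \<Rightarrow> ('h \<Rightarrow> 'h) \<Rightarrow> ('h \<Rightarrow> 'h) \<Rightarrow> 'x \<Rightarrow> complex" where
  "op_conv ip U R A B x = trace ip (B \<circ> (U x \<circ> (R \<circ> A \<circ> R) \<circ> adj ip (U x)))"

end

theory Submission
  imports Defs
begin


locale hs =
  fixes smul :: "complex \<Rightarrow> 'h::ab_group_add \<Rightarrow> 'h" and ip :: "'h \<Rightarrow> 'h \<Rightarrow> complex"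
  assumes hs: "hilbert_space smul ip"
begin

lemma hsd: "(\<forall>x. smul 1 x = x) \<and> (\<forall>a b x. smul a (smul b x) = smul (a * b) x) \<and> (\<forall>a b x. smul (a + b) x = smul a x + smul b x) \<and> (\<forall>a x y. smul a (x + y) = smul a x + smul a y) \<and> (\<forall>x y z. ip (x + y) z = ip x z + ip y z) \<and> (\<forall>a x y. ip (smul a x) y = a * ip x y) \<and> (\<forall>x y. ip y x = cnj (ip x y)) \<and> (\<forall>x. Im (ip x x) = 0 \<and> Re (ip x x) \<ge> 0) \<and> (\<forall>x. ip x x = 0 \<longrightarrow> x = 0)"
  using hs unfolding hilbert_space_def by (elim conjE) (intro conjI)
lemma smul_one[simp]: "smul 1 x = x" by (rule hsd[THEN conjunct1, rule_format])
lemma smul_smul[simp]: "smul a (smul b x) = smul (a * b) x" by (rule hsd[THEN conjunct2, THEN conjunct1, rule_format])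
lemma smul_add_left: "smul (a + b) x = smul a x + smul b x" by (rule hsd[THEN conjunct2, THEN conjunct2, THEN conjunct1, rule_format])
lemma smul_add_right: "smul a (x + y) = smul a x + smul a y" by (rule hsd[THEN conjunct2, THEN conjunct2, THEN conjunct2, THEN conjunct1, rule_format])
lemma ip_add_left: "ip (x + y) z = ip x z + ip y z" by (rule hsd[THEN conjunct2, THEN conjunct2, THEN conjunct2, THEN conjunct2, THEN conjunct1, rule_format])
lemma ip_smul_left[simp]: "ip (smul a x) y = a * ip x y" by (rule hsd[THEN conjunct2, THEN conjunct2, THEN conjunct2, THEN conjunct2, THEN conjunct2, THEN conjunct1, rule_format])
lemma ip_sym: "ip y x = cnj (ip x y)" by (rule hsd[THEN conjunct2, THEN conjunct2, THEN conjunct2, THEN conjunct2, THEN conjunct2, THEN conjunct2, THEN conjunct1, rule_format])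
lemma ip_self_Im[simp]: "Im (ip x x) = 0" by (rule hsd[THEN conjunct2, THEN conjunct2, THEN conjunct2, THEN conjunct2, THEN conjunct2, THEN conjunct2, THEN conjunct2, THEN conjunct1, THEN spec, THEN conjunct1])
lemma ip_self_Re: "Re (ip x x) \<ge> 0" by (rule hsd[THEN conjunct2, THEN conjunct2, THEN conjunct2, THEN conjunct2, THEN conjunct2, THEN conjunct2, THEN conjunct2, THEN conjunct1, THEN spec, THEN conjunct2])
lemma ip_self_eq0: "ip x x = 0 \<Longrightarrow> x = 0" by (rule hsd[THEN conjunct2, THEN conjunct2, THEN conjunct2, THEN conjunct2, THEN conjunct2, THEN conjunct2, THEN conjunct2, THEN conjunct2, rule_format])
lemma complete: "(\<forall>e>0. \<exists>N. \<forall>m\<ge>N. \<forall>n\<ge>N. hnorm ip (s m - s n) < e) \<Longrightarrow> (\<exists>l. (\<lambda>n. hnorm ip (s n - l)) \<longlonglongrightarrow> 0)"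
  by (rule hs[unfolded hilbert_space_def, THEN conjunct2, THEN conjunct2, THEN conjunct2, THEN conjunct2, THEN conjunct2, THEN conjunct2, THEN conjunct2, THEN conjunct2, THEN conjunct2, THEN spec, THEN mp])

lemma ip_zero_left[simp]: "ip 0 y = 0"
  using ip_add_left[of 0 0 y] by simp
lemma ip_minus_left[simp]: "ip (- x) y = - ip x y"
  using ip_add_left[of x "-x" y] by (metis neg_eq_iff_add_eq_0 ip_zero_left right_minus)
lemma ip_diff_left: "ip (x - y) z = ip x z - ip y z"
  using ip_add_left[of x "-y" z] by simp
lemma ip_add_right: "ip x (y + z) = ip x y + ip x z"
  by (metis ip_sym ip_add_left complex_cnj_add)
lemma ip_smul_right[simp]: "ip x (smul a y) = cnj a * ip x y"
  by (metis ip_sym ip_smul_left complex_cnj_mult)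
lemma ip_zero_right[simp]: "ip x 0 = 0"
  by (metis ip_sym ip_zero_left complex_cnj_zero)
lemma ip_minus_right[simp]: "ip x (- y) = - ip x y"
  by (metis ip_sym ip_minus_left complex_cnj_minus)
lemma ip_diff_right: "ip x (y - z) = ip x y - ip x z"
  by (metis ip_sym ip_diff_left complex_cnj_diff)
lemma ip_sum_left: "ip (sum f F) y = (\<Sum>i\<in>F. ip (f i) y)"
  by (induction F rule: infinite_finite_induct) (auto simp: ip_add_left)
lemma ip_sum_right: "ip y (sum f F) = (\<Sum>i\<in>F. ip y (f i))"
  by (induction F rule: infinite_finite_induct) (auto simp: ip_add_right)
lemma smul_zero_left[simp]: "smul 0 x = 0"
  using smul_add_left[of 0 0 x] by simp
lemma smul_zero_right[simp]: "smul a 0 = 0"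
  using smul_add_right[of a 0 0] by simp
lemma smul_minus_right: "smul a (- x) = - smul a x"
  using smul_add_right[of a x "-x"] by (metis neg_eq_iff_add_eq_0 smul_zero_right right_minus)
lemma smul_diff_right: "smul a (x - y) = smul a x - smul a y"
  using smul_add_right[of a x "-y"] smul_minus_right by simp
lemma smul_sum_right: "smul a (sum f F) = (\<Sum>i\<in>F. smul a (f i))"
  by (induction F rule: infinite_finite_induct) (auto simp: smul_add_right)
lemma smul_minus_left: "smul (- a) x = - smul a x"
  using smul_add_left[of a "-a" x] by (metis neg_eq_iff_add_eq_0 smul_zero_left right_minus)

lemma ip_self_real: "ip x x = complex_of_real (Re (ip x x))"
  by (simp add: complex_eq_iff)

lemma ext_ip: assumes "\<And>z. ip x z = ip y z" shows "x = y"
proof -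
  have "ip (x - y) (x - y) = 0" using assms by (simp add: ip_diff_left)
  then show ?thesis using ip_self_eq0[of "x - y"] by simp
qed

lemma ext_ip_right: assumes "\<And>z. ip z x = ip z y" shows "x = y"
  using ext_ip[of x y] assms by (metis ip_sym)

lemma hnorm_sq: "(hnorm ip x)^2 = Re (ip x x)"
  unfolding hnorm_def using ip_self_Re by simp

lemma hnorm_nonneg: "hnorm ip x \<ge> 0" unfolding hnorm_def using ip_self_Re by simp

lemma hnorm_minus_commute: "hnorm ip (x - y) = hnorm ip (y - x)"
proof -
  have "ip (x - y) (x - y) = ip (y - x) (y - x)"
    by (metis ip_minus_left ip_minus_right minus_diff_eq minus_minus)
  then show ?thesis unfolding hnorm_def by simp
qed

lemma cs_form:
  fixes K :: "'h \<Rightarrow> 'h"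
  assumes add: "\<And>x y. K (x + y) = K x + K y" and hom: "\<And>a x. K (smul a x) = smul a (K x)"
    and sa: "\<And>x y. ip (K x) y = ip x (K y)" and pos: "\<And>x. Re (ip (K x) x) \<ge> 0"
  shows "(cmod (ip (K u) v))^2 \<le> Re (ip (K u) u) * Re (ip (K v) v)"
proof -
  have Kdiff: "K (x - y) = K x - K y" for x y
    by (metis add diff_add_cancel eq_diff_eq)
  define z where "z = ip (K u) v"
  define a where "a = Re (ip (K u) u)"
  define c where "c = Re (ip (K v) v)"
  define b where "b = (cmod z)^2"
  have a0: "a \<ge> 0" "c \<ge> 0" using pos unfolding a_def c_def by auto
  have real_u: "Im (ip (K u) u) = 0" using sa[of u u] ip_sym[of "K u" u] by (metis cnj.simps(2) neg_equal_zero)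
  have real_v: "Im (ip (K v) v) = 0" using sa[of v v] ip_sym[of "K v" v] by (metis cnj.simps(2) neg_equal_zero)
  have cz: "ip (K v) u = cnj z" unfolding z_def by (metis ip_sym sa)
  have quad: "a - 2 * t * b + t^2 * b * c \<ge> 0" for t :: real
  proof -
    define s where "s = complex_of_real t * z"
    have "Re (ip (K (u - smul s v)) (u - smul s v)) \<ge> 0" by (rule pos)
    also have "ip (K (u - smul s v)) (u - smul s v) =
        ip (K u) u - cnj s * z - s * cnj z + s * cnj s * ip (K v) v"
      by (simp add: Kdiff hom ip_diff_left ip_diff_right cz z_def algebra_simps)
    also have "Re \<dots> = a - 2 * t * b + t^2 * b * c"
    proof -
      have zz: "z * cnj z = complex_of_real b" unfolding b_def using complex_norm_square[of z] by simp
      have e1: "cnj s * z = complex_of_real (t * b)" unfolding s_def using zz by (simp add: mult.commute)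
      have e2: "s * cnj z = complex_of_real (t * b)" unfolding s_def using zz by (simp add: mult.assoc)
      have e3: "s * cnj s = complex_of_real (t^2 * b)" unfolding s_def using zz
        by (simp add: power2_eq_square algebra_simps)
      have e4: "ip (K v) v = complex_of_real c" unfolding c_def using real_v by (simp add: complex_eq_iff)
      show ?thesis unfolding e1 e2 e3 e4 a_def by (simp add: power2_eq_square)
    qed
    finally show ?thesis .
  qed
  have "b \<le> a * c"
  proof (cases "b = 0")
    case True then show ?thesis using a0 by simp
  next
    case False
    then have bpos: "b > 0" unfolding b_def by simp
    show ?thesis
    proof (cases "c = 0")
      case True
      have "a - 2 * ((a + 1) / (2 * b)) * b + ((a + 1) / (2 * b))^2 * b * c \<ge> 0" by (rule quad)
      then have "a - (a + 1) \<ge> 0" using bpos True by (simp add: field_simps)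
      then show ?thesis by simp
    next
      case False
      then have cpos: "c > 0" using a0 by simp
      have "a - 2 * (1 / c) * b + (1 / c)^2 * b * c \<ge> 0" by (rule quad)
      then have "a - b / c \<ge> 0" using cpos by (simp add: field_simps power2_eq_square)
      then show ?thesis using cpos by (simp add: field_simps)
    qed
  qed
  then show ?thesis unfolding b_def z_def a_def c_def .
qed

lemma cs_sq: "(cmod (ip u v))^2 \<le> Re (ip u u) * Re (ip v v)"
  using cs_form[of "\<lambda>x. x"] ip_self_Re by simp

lemma cs: "cmod (ip u v) \<le> hnorm ip u * hnorm ip v"
proof -
  have "(cmod (ip u v))^2 \<le> (hnorm ip u * hnorm ip v)^2"
    using cs_sq by (simp add: power_mult_distrib hnorm_sq)
  then show ?thesis using hnorm_nonneg by (meson mult_nonneg_nonneg power2_le_imp_le)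
qed

end



context hs begin

lemma bop_add: "bounded_op smul ip K \<Longrightarrow> K (x + y) = K x + K y"
  unfolding bounded_op_def by blast
lemma bop_smul: "bounded_op smul ip K \<Longrightarrow> K (smul a x) = smul a (K x)"
  unfolding bounded_op_def by blast
lemma bop_bound: "bounded_op smul ip K \<Longrightarrow> \<exists>C. \<forall>x. hnorm ip (K x) \<le> C * hnorm ip x"
  unfolding bounded_op_def by blast
lemma bop_zero: "bounded_op smul ip K \<Longrightarrow> K 0 = 0"
  using bop_add[of K 0 0] by simp
lemma bop_diff: "bounded_op smul ip K \<Longrightarrow> K (x - y) = K x - K y"
  using bop_add[of K "x - y" y] by (metis add_diff_cancel diff_add_cancel)
lemma bop_sum: "bounded_op smul ip K \<Longrightarrow> K (sum f F) = (\<Sum>i\<in>F. K (f i))"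
  by (induction F rule: infinite_finite_induct) (auto simp: bop_add bop_zero)

lemma pos_bop: "positive_op smul ip K \<Longrightarrow> bounded_op smul ip K"
  unfolding positive_op_def by blast
lemma pos_Im: "positive_op smul ip K \<Longrightarrow> Im (ip (K x) x) = 0"
  unfolding positive_op_def by blast
lemma pos_Re: "positive_op smul ip K \<Longrightarrow> Re (ip (K x) x) \<ge> 0"
  unfolding positive_op_def by blast

lemma pos_sa:
  assumes P: "positive_op smul ip K"
  shows "ip (K x) y = ip x (K y)"
proof -
  have B: "bounded_op smul ip K" using P by (rule pos_bop)
  define a where "a = ip (K x) y"
  define b where "b = ip (K y) x"
  have "Im (ip (K (x + y)) (x + y)) = 0" using P by (rule pos_Im)
  then have h1: "Im (a + b) = 0"
    using pos_Im[OF P, of x] pos_Im[OF P, of y]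
    by (simp add: bop_add[OF B] ip_add_left ip_add_right a_def b_def)
  have "Im (ip (K (x + smul \<i> y)) (x + smul \<i> y)) = 0" using P by (rule pos_Im)
  then have "Im (ip (K x) x + (- \<i>) * a + \<i> * b + ip (K y) y) = 0"
    by (simp add: bop_add[OF B] bop_smul[OF B] ip_add_left ip_add_right a_def b_def)
  then have h2: "Re b - Re a = 0"
    using pos_Im[OF P, of x] pos_Im[OF P, of y] by simp
  have "b = cnj a" using h1 h2 by (simp add: complex_eq_iff)
  then show ?thesis unfolding a_def b_def by (metis ip_sym complex_cnj_cnj)
qed

lemma pos_cs:
  assumes P: "positive_op smul ip K"
  shows "(cmod (ip (K u) v))^2 \<le> Re (ip (K u) u) * Re (ip (K v) v)"
  by (rule cs_form[OF bop_add[OF pos_bop[OF P]] bop_smul[OF pos_bop[OF P]] pos_sa[OF P] pos_Re[OF P]])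

lemma pos_zero:
  assumes P: "positive_op smul ip K" and z: "Re (ip (K u) u) = 0"
  shows "K u = 0"
proof -
  have "(cmod (ip (K u) (K u)))^2 \<le> 0" using pos_cs[OF P, of u "K u"] z by simp
  then have "ip (K u) (K u) = 0" by simp
  then show ?thesis by (rule ip_self_eq0)
qed

lemma adj_sa:
  assumes "\<And>x y. ip (K x) y = ip x (K y)"
  shows "adj ip K = K"
proof -
  have ex: "\<exists>S. \<forall>x y. ip (K x) y = ip x (S y)" using assms by blast
  have S: "\<forall>x y. ip (K x) y = ip x (adj ip K y)"
    unfolding adj_def by (rule someI_ex[OF ex])
  show ?thesis
  proof
    fix y show "adj ip K y = K y"
    proof (rule ext_ip_right)
      fix z
      have "ip z (adj ip K y) = ip (K z) y" using S by simp
      also have "\<dots> = ip z (K y)" by (rule assms)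
      finally show "ip z (adj ip K y) = ip z (K y)" .
    qed
  qed
qed

lemma adj_unitary:
  assumes "unitary_op smul ip V"
  shows "ip (V a) b = ip a (adj ip V b)"
proof -
  have su: "surj V" and iso: "\<And>x y. ip (V x) (V y) = ip x y"
    using assms unfolding unitary_op_def by auto
  have ex: "\<exists>S. \<forall>x y. ip (V x) y = ip x (S y)"
  proof (intro exI allI)
    fix x y
    have "ip (V x) y = ip (V x) (V (inv V y))" by (simp add: surj_f_inv_f[OF su])
    also have "\<dots> = ip x (inv V y)" by (rule iso)
    finally show "ip (V x) y = ip x (inv V y)" .
  qed
  have S: "\<forall>x y. ip (V x) y = ip x (adj ip V y)"
    unfolding adj_def by (rule someI_ex[OF ex])
  show ?thesis by (rule S[rule_format])
qed

section \<open>Orthonormal systems\<close>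

definition orthonormal :: "'h set \<Rightarrow> bool" where
  "orthonormal E \<longleftrightarrow> (\<forall>e\<in>E. ip e e = 1) \<and> (\<forall>e\<in>E. \<forall>f\<in>E. e \<noteq> f \<longrightarrow> ip e f = 0)"

lemma on_norm: "orthonormal E \<Longrightarrow> e \<in> E \<Longrightarrow> ip e e = 1"
  unfolding orthonormal_def by simp
lemma on_orth: "orthonormal E \<Longrightarrow> e \<in> E \<Longrightarrow> f \<in> E \<Longrightarrow> e \<noteq> f \<Longrightarrow> ip e f = 0"
  unfolding orthonormal_def by simp

lemma onb_orthonormal: "onb ip E \<Longrightarrow> orthonormal E"
  unfolding onb_def orthonormal_def by (elim conjE) (intro conjI)

lemma orthonormalI:
  assumes "\<And>e. e \<in> E \<Longrightarrow> ip e e = 1" "\<And>e f. e \<in> E \<Longrightarrow> f \<in> E \<Longrightarrow> e \<noteq> f \<Longrightarrow> ip e f = 0"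
  shows "orthonormal E"
  unfolding orthonormal_def using assms by simp

lemma onb_exists: "\<exists>E. onb ip E"
proof -
  let ?A = "{E. orthonormal E}"
  have "\<forall>C\<in>chains ?A. \<Union>C \<in> ?A"
  proof
    fix C assume C: "C \<in> chains ?A"
    have CA: "X \<in> C \<Longrightarrow> orthonormal X" for X using chainsD2[OF C] by auto
    show "\<Union>C \<in> ?A" unfolding mem_Collect_eq
    proof (rule orthonormalI)
      fix e assume "e \<in> \<Union>C"
      then obtain X where "X \<in> C" "e \<in> X" by blast
      then show "ip e e = 1" using on_norm[OF CA] by auto
    next
      fix e f assume e: "e \<in> \<Union>C" and f: "f \<in> \<Union>C" and ne: "e \<noteq> f"
      from e obtain X where X: "X \<in> C" "e \<in> X" by blast
      from f obtain Y where Y: "Y \<in> C" "f \<in> Y" by blast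
      have "X \<subseteq> Y \<or> Y \<subseteq> X" using chainsD[OF C X(1) Y(1)] .
      then obtain Z where "Z \<in> C" "e \<in> Z" "f \<in> Z" using X Y by blast
      then show "ip e f = 0" using on_orth[OF CA] ne by auto
    qed
  qed
  from Zorn_Lemma[OF this] obtain E where E: "orthonormal E"
    and max: "\<And>X. orthonormal X \<Longrightarrow> E \<subseteq> X \<Longrightarrow> X = E" by auto
  have compl: "x = 0" if orth: "\<forall>e\<in>E. ip x e = 0" for x
  proof (rule ccontr)
    assume x0: "x \<noteq> 0"
    define r where "r = Re (ip x x)"
    have "ip x x \<noteq> 0" using x0 ip_self_eq0 by auto
    then have rpos: "r > 0" unfolding r_def using ip_self_Re[of x] ip_self_real[of x]
      by (metis less_eq_real_def of_real_0)
    define e where "e = smul (complex_of_real (1 / sqrt r)) x"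
    have ee: "ip e e = 1"
    proof -
      have "ip e e = complex_of_real (1 / sqrt r) * complex_of_real (1 / sqrt r) * ip x x"
        unfolding e_def by simp
      also have "ip x x = complex_of_real r" unfolding r_def by (rule ip_self_real)
      finally show ?thesis using rpos
        by (simp flip: of_real_mult)
    qed
    have eo: "ip e f = 0" if "f \<in> E" for f unfolding e_def using orth that by simp
    have eo2: "ip f e = 0" if "f \<in> E" for f using eo[OF that] by (metis complex_cnj_zero ip_sym)
    have eE: "e \<notin> E" using eo ee by force
    have "orthonormal (insert e E)"
    proof (rule orthonormalI)
      fix f assume "f \<in> insert e E" then show "ip f f = 1" using ee on_norm[OF E] by auto
    next
      fix f g assume f: "f \<in> insert e E" and g: "g \<in> insert e E" and ne: "f \<noteq> g"
      show "ip f g = 0"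
      proof (cases "f = e")
        case True then show ?thesis using g ne eo by auto
      next
        case False
        then have fE: "f \<in> E" using f by auto
        show ?thesis
        proof (cases "g = e")
          case True then show ?thesis using eo2[OF fE] by simp
        next
          case False then show ?thesis using fE g ne on_orth[OF E] by auto
        qed
      qed
    qed
    then have "insert e E = E" using max by auto
    then show False using eE by auto
  qed
  have "onb ip E" unfolding onb_def
    using on_norm[OF E] on_orth[OF E] compl by auto
  then show ?thesis by auto
qed

lemma on_collapse:
  assumes O: "orthonormal E" and F: "finite F" "F \<subseteq> E"
  shows "(\<Sum>e\<in>F. \<Sum>e'\<in>F. g e e' * ip e e') = (\<Sum>e\<in>F. g e e)"
proof (rule sum.cong[OF refl])
  fix e assume e: "e \<in> F"
  have "(\<Sum>e'\<in>F. g e e' * ip e e') = g e e * ip e e + (\<Sum>e'\<in>F - {e}. g e e' * ip e e')"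
    by (rule sum.remove[OF F(1) e])
  also have "(\<Sum>e'\<in>F - {e}. g e e' * ip e e') = 0"
  proof (intro sum.neutral ballI)
    fix e' assume e': "e' \<in> F - {e}"
    then have "ip e e' = 0" using on_orth[OF O, of e e'] F e by auto
    then show "g e e' * ip e e' = 0" by simp
  qed
  also have "ip e e = 1" using on_norm[OF O, of e] F e by auto
  finally show "(\<Sum>e'\<in>F. g e e' * ip e e') = g e e" by (simp only: mult_1_right add_0_right)
qed

lemma ip_lincomb_left: "ip (\<Sum>e\<in>F. smul (c e) e) y = (\<Sum>e\<in>F. c e * ip e y)"
  by (simp add: ip_sum_left)
lemma ip_lincomb_right: "ip y (\<Sum>e\<in>F. smul (c e) e) = (\<Sum>e\<in>F. cnj (c e) * ip y e)"
  by (simp add: ip_sum_right)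

lemma ip_lincomb_self:
  assumes O: "orthonormal E" and F: "finite F" "F \<subseteq> E"
  shows "ip (\<Sum>e\<in>F. smul (c e) e) (\<Sum>e\<in>F. smul (c e) e) = (\<Sum>e\<in>F. complex_of_real ((cmod (c e))^2))"
proof -
  have "ip (\<Sum>e\<in>F. smul (c e) e) (\<Sum>e\<in>F. smul (c e) e) = (\<Sum>e'\<in>F. \<Sum>e\<in>F. cnj (c e') * (c e * ip e e'))"
    by (simp add: ip_sum_left ip_sum_right sum_distrib_left)
  also have "\<dots> = (\<Sum>e\<in>F. \<Sum>e'\<in>F. cnj (c e') * (c e * ip e e'))"
    by (rule sum.swap)
  also have "\<dots> = (\<Sum>e\<in>F. \<Sum>e'\<in>F. (c e * cnj (c e')) * ip e e')"
    by (simp add: mult.assoc mult.left_commute)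
  also have "\<dots> = (\<Sum>e\<in>F. c e * cnj (c e))" by (rule on_collapse[OF O F])
  also have "\<dots> = (\<Sum>e\<in>F. complex_of_real ((cmod (c e))^2))"
    by (intro sum.cong refl) (simp add: complex_norm_square[symmetric] del: of_real_power)
  finally show ?thesis .
qed

end



context hs begin

lemma bessel_id:
  fixes x :: 'h
  assumes O: "orthonormal E" and F: "finite F" "F \<subseteq> E"
  defines "p \<equiv> (\<Sum>e\<in>F. smul (ip x e) e)"
  shows "ip (x - p) y = ip x y - (\<Sum>e\<in>F. ip x e * ip e y)"
    and "Re (ip (x - p) (x - p)) = Re (ip x x) - (\<Sum>e\<in>F. (cmod (ip x e))^2)"
proof -
  show "ip (x - p) y = ip x y - (\<Sum>e\<in>F. ip x e * ip e y)"
    unfolding p_def by (simp add: ip_diff_left ip_sum_left)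
  have pp: "ip p p = (\<Sum>e\<in>F. complex_of_real ((cmod (ip x e))^2))"
    unfolding p_def by (rule ip_lincomb_self[OF O F])
  have px: "ip p x = (\<Sum>e\<in>F. complex_of_real ((cmod (ip x e))^2))"
    unfolding p_def ip_sum_left
  proof (intro sum.cong refl)
    fix e
    have "ip (smul (ip x e) e) x = ip x e * cnj (ip x e)" by (simp add: ip_sym[of x e])
    then show "ip (smul (ip x e) e) x = complex_of_real ((cmod (ip x e))^2)"
      by (simp add: complex_norm_square[symmetric] del: of_real_power)
  qed
  have xp: "ip x p = (\<Sum>e\<in>F. complex_of_real ((cmod (ip x e))^2))"
    unfolding p_def ip_sum_right
  proof (intro sum.cong refl)
    fix e
    have "ip x (smul (ip x e) e) = ip x e * cnj (ip x e)" by (simp add: mult.commute)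
    then show "ip x (smul (ip x e) e) = complex_of_real ((cmod (ip x e))^2)"
      by (simp add: complex_norm_square[symmetric] del: of_real_power)
  qed
  show "Re (ip (x - p) (x - p)) = Re (ip x x) - (\<Sum>e\<in>F. (cmod (ip x e))^2)"
    by (simp add: ip_diff_left ip_diff_right pp px xp)
qed

lemma bessel:
  assumes O: "orthonormal E" and F: "finite F" "F \<subseteq> E"
  shows "(\<Sum>e\<in>F. (cmod (ip x e))^2) \<le> Re (ip x x)"
  using bessel_id(2)[OF O F, of x] ip_self_Re[of "x - (\<Sum>e\<in>F. smul (ip x e) e)"] by simp

lemma on_coeff:
  assumes O: "orthonormal E" and F: "finite F" "F \<subseteq> E" and e: "e \<in> F"
  shows "(\<Sum>e'\<in>F. c e' * ip e' e) = c e"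
proof -
  have "(\<Sum>e'\<in>F. c e' * ip e' e) = c e * ip e e + (\<Sum>e'\<in>F - {e}. c e' * ip e' e)"
    by (rule sum.remove[OF F(1) e])
  also have "(\<Sum>e'\<in>F - {e}. c e' * ip e' e) = 0"
  proof (intro sum.neutral ballI)
    fix e' assume e': "e' \<in> F - {e}"
    then have "ip e' e = 0" using on_orth[OF O, of e' e] F e by auto
    then show "c e' * ip e' e = 0" by simp
  qed
  also have "ip e e = 1" using on_norm[OF O, of e] F e by auto
  finally show ?thesis by (simp only: mult_1_right add_0_right)
qed

lemma on_coeff0:
  assumes O: "orthonormal E" and F: "F \<subseteq> E" and e: "e \<in> E" "e \<notin> F"
  shows "(\<Sum>e'\<in>F. c e' * ip e' e) = 0"
proof (intro sum.neutral ballI)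
  fix e' assume e': "e' \<in> F"
  then have "ip e' e = 0" using on_orth[OF O, of e' e] F e by auto
  then show "c e' * ip e' e = 0" by simp
qed

lemma onb_complete: "onb ip E \<Longrightarrow> (\<And>e. e \<in> E \<Longrightarrow> ip x e = 0) \<Longrightarrow> x = 0"
  unfolding onb_def by simp

lemma hnorm_unit: "ip e e = 1 \<Longrightarrow> hnorm ip e = 1"
  unfolding hnorm_def by simp

lemma parseval_norm:
  assumes B: "onb ip E"
  shows "((\<lambda>e. (cmod (ip x e))^2) has_sum Re (ip x x)) E"
proof -
  have O: "orthonormal E" using B by (rule onb_orthonormal)
  define f where "f e = (cmod (ip x e))^2" for e
  have f0: "f e \<ge> 0" for e unfolding f_def by simp
  have bdd: "bdd_above (sum f ` {F. F \<subseteq> E \<and> finite F})"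
    by (rule bdd_aboveI[where M="Re (ip x x)"]) (auto simp: f_def intro: bessel[OF O])
  have summ: "f summable_on E" by (rule nonneg_bdd_above_summable_on[OF _ bdd]) (simp add: f0)
  define s where "s = infsum f E"
  have hs: "(f has_sum s) E" using summ unfolding s_def by (rule has_sum_infsum)
  have fin_le: "sum f F \<le> s" if "finite F" "F \<subseteq> E" for F
    unfolding s_def by (rule finite_sum_le_infsum[OF summ that]) (simp add: f0)
  have sle: "s \<le> Re (ip x x)"
    unfolding s_def by (rule infsum_le_finite_sums[OF summ]) (auto simp: f_def intro: bessel[OF O])
  have exG: "\<exists>G. finite G \<and> G \<subseteq> E \<and> s - sum f G < inverse (real (Suc n))" for n
  proof -
    have "s - inverse (real (Suc n)) < s" by simp
    then have "eventually (\<lambda>F. s - inverse (real (Suc n)) < sum f F) (finite_subsets_at_top E)"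
      using hs unfolding has_sum_def by (rule order_tendstoD(1)[rotated])
    then obtain X where "finite X" "X \<subseteq> E" "\<forall>Y. finite Y \<and> X \<subseteq> Y \<and> Y \<subseteq> E \<longrightarrow> s - inverse (real (Suc n)) < sum f Y"
      unfolding eventually_finite_subsets_at_top by blast
    then show ?thesis by (intro exI[of _ X]) auto
  qed
  then obtain G where G: "\<And>n. finite (G n)" "\<And>n. G n \<subseteq> E" "\<And>n. s - sum f (G n) < inverse (real (Suc n))"
    by metis
  define F where "F n = (\<Union>k\<le>n. G k)" for n
  have Ffin: "finite (F n)" for n unfolding F_def using G(1) by auto
  have FE: "F n \<subseteq> E" for n unfolding F_def using G(2) by auto
  have Fmono: "F n \<subseteq> F m" if "n \<le> m" for n m unfolding F_def using that by (intro UN_mono) auto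
  have gap0: "0 \<le> s - sum f (F n)" for n using fin_le[OF Ffin FE] by simp
  have gap: "s - sum f (F n) < inverse (real (Suc n))" for n
  proof -
    have "sum f (G n) \<le> sum f (F n)"
      by (rule sum_mono2[OF Ffin]) (auto simp: F_def f0)
    then show ?thesis using G(3)[of n] by simp
  qed
  define z where "z n = (\<Sum>e\<in>F n. smul (ip x e) e)" for n
  have zdiff: "z m - z n = (\<Sum>e\<in>F m - F n. smul (ip x e) e)" if "n \<le> m" for n m
    unfolding z_def using sum.subset_diff[OF Fmono[OF that] Ffin[of m], of "\<lambda>e. smul (ip x e) e"]
    by simp
  have znorm: "Re (ip (z m - z n) (z m - z n)) < inverse (real (Suc n))" if "n \<le> m" for n m
  proof -
    have D: "finite (F m - F n)" "F m - F n \<subseteq> E" using Ffin FE by auto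
    have "Re (ip (z m - z n) (z m - z n)) = sum f (F m - F n)"
      unfolding zdiff[OF that] ip_lincomb_self[OF O D] f_def by simp
    also have "\<dots> = sum f (F m) - sum f (F n)"
      using sum.subset_diff[OF Fmono[OF that] Ffin[of m], of f] by simp
    also have "\<dots> \<le> s - sum f (F n)" using fin_le[OF Ffin FE, of m] by simp
    finally show ?thesis using gap[of n] by simp
  qed
  have cauchy: "\<forall>e>0. \<exists>N. \<forall>m\<ge>N. \<forall>n\<ge>N. hnorm ip (z m - z n) < e"
  proof (intro allI impI)
    fix \<epsilon> :: real assume ep: "\<epsilon> > 0"
    obtain N where N: "inverse (real (Suc N)) < \<epsilon>^2" using reals_Archimedean[of "\<epsilon>^2"] ep by auto
    have less: "hnorm ip (z m - z n) < \<epsilon>" if "N \<le> n" "n \<le> m" for m n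
    proof -
      have "(hnorm ip (z m - z n))^2 < inverse (real (Suc n))" unfolding hnorm_sq using znorm[OF that(2)] .
      also have "\<dots> \<le> inverse (real (Suc N))" using that(1) by (simp add: field_simps)
      also have "\<dots> < \<epsilon>^2" by (rule N)
      finally show ?thesis using ep by (simp add: power_less_imp_less_base)
    qed
    show "\<exists>N. \<forall>m\<ge>N. \<forall>n\<ge>N. hnorm ip (z m - z n) < \<epsilon>"
    proof (intro exI allI impI)
      fix m n assume "N \<le> m" "N \<le> n"
      then show "hnorm ip (z m - z n) < \<epsilon>"
        using less[of n m] less[of m n] hnorm_minus_commute[of "z m" "z n"] by (cases "n \<le> m") auto
    qed
  qed
  obtain l where l: "(\<lambda>n. hnorm ip (z n - l)) \<longlonglongrightarrow> 0" using complete[OF cauchy] by blast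
  have perp: "ip (x - l) e = 0" if e: "e \<in> E" for e
  proof -
    have he: "hnorm ip e = 1" using on_norm[OF O e] by (rule hnorm_unit)
    have t1: "(\<lambda>n. ip (x - z n) e) \<longlonglongrightarrow> ip (x - l) e"
    proof (rule LIM_zero_cancel, rule Lim_null_comparison[OF _ l])
      show "\<forall>\<^sub>F n in sequentially. norm (ip (x - z n) e - ip (x - l) e) \<le> hnorm ip (z n - l)"
      proof (rule always_eventually, rule allI)
        fix n
        have "ip (x - z n) e - ip (x - l) e = ip (l - z n) e" by (simp add: ip_diff_left)
        then have "norm (ip (x - z n) e - ip (x - l) e) = cmod (ip (l - z n) e)" by simp
        also have "\<dots> \<le> hnorm ip (l - z n) * hnorm ip e" by (rule cs)
        finally show "norm (ip (x - z n) e - ip (x - l) e) \<le> hnorm ip (z n - l)"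
          using he hnorm_minus_commute[of l "z n"] by simp
      qed
    qed
    have t2: "(\<lambda>n. ip (x - z n) e) \<longlonglongrightarrow> 0"
    proof (rule Lim_null_comparison)
      show "(\<lambda>n. sqrt (inverse (real (Suc n)))) \<longlonglongrightarrow> 0"
        using tendsto_real_sqrt[OF LIMSEQ_inverse_real_of_nat] by simp
      show "\<forall>\<^sub>F n in sequentially. norm (ip (x - z n) e) \<le> sqrt (inverse (real (Suc n)))"
      proof (rule always_eventually, rule allI)
        fix n
        show "norm (ip (x - z n) e) \<le> sqrt (inverse (real (Suc n)))"
        proof (cases "e \<in> F n")
          case True
          have "ip (z n) e = ip x e" unfolding z_def ip_lincomb_left
            by (rule on_coeff[OF O Ffin FE True])
          then show ?thesis by (simp add: ip_diff_left)
        next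
          case False
          have "ip (z n) e = 0" unfolding z_def ip_lincomb_left
            by (rule on_coeff0[OF O FE e False])
          then have eq: "ip (x - z n) e = ip x e" by (simp add: ip_diff_left)
          have "sum f (insert e (F n)) \<le> s" using fin_le[of "insert e (F n)"] Ffin FE e by auto
          then have "f e \<le> s - sum f (F n)" using Ffin False by simp
          then have "(cmod (ip x e))^2 \<le> inverse (real (Suc n))" using gap[of n] unfolding f_def by simp
          then show ?thesis unfolding eq by (simp add: real_le_rsqrt)
        qed
      qed
    qed
    show ?thesis using LIMSEQ_unique[OF t1 t2] .
  qed
  have "x - l = 0" by (rule onb_complete[OF B perp])
  then have lx: "l = x" by simp
  have conv: "(\<lambda>n. Re (ip x x) - sum f (F n)) \<longlonglongrightarrow> 0"
  proof -
    have "(\<lambda>n. (hnorm ip (z n - l))^2) \<longlonglongrightarrow> 0^2" by (intro tendsto_intros l)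
    moreover have "(hnorm ip (z n - l))^2 = Re (ip x x) - sum f (F n)" for n
    proof -
      have "(hnorm ip (z n - l))^2 = Re (ip (x - z n) (x - z n))"
        unfolding lx hnorm_minus_commute[of "z n" x] hnorm_sq ..
      also have "\<dots> = Re (ip x x) - sum f (F n)"
        unfolding z_def f_def by (rule bessel_id(2)[OF O Ffin FE])
      finally show ?thesis .
    qed
    ultimately show ?thesis by simp
  qed
  have "Re (ip x x) - s \<le> 0"
    by (rule LIMSEQ_le_const[OF conv]) (use fin_le[OF Ffin FE] in auto)
  then have "s = Re (ip x x)" using sle by simp
  then show ?thesis using hs unfolding f_def by simp
qed

lemma parseval:
  assumes B: "onb ip E"
  shows "((\<lambda>e. ip x e * ip e y) has_sum ip x y) E"
proof -
  have O: "orthonormal E" using B by (rule onb_orthonormal)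
  define f where "f e = (cmod (ip x e))^2" for e
  have hn: "(sum f \<longlongrightarrow> Re (ip x x)) (finite_subsets_at_top E)"
    using parseval_norm[OF B, of x] unfolding has_sum_def f_def .
  show ?thesis unfolding has_sum_def
  proof (rule tendstoI)
    fix \<epsilon> :: real assume ep: "\<epsilon> > 0"
    define hy where "hy = hnorm ip y"
    have hy0: "hy \<ge> 0" unfolding hy_def by (rule hnorm_nonneg)
    define \<delta> where "\<delta> = (\<epsilon> / (hy + 1))^2"
    have dp: "\<delta> > 0" unfolding \<delta>_def using ep hy0 by simp
    have ev: "eventually (\<lambda>F. dist (sum f F) (Re (ip x x)) < \<delta>) (finite_subsets_at_top E)"
      using tendstoD[OF hn dp] .
    have ev2: "eventually (\<lambda>F. finite F \<and> F \<subseteq> E) (finite_subsets_at_top E)"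
      by (rule eventually_finite_subsets_at_top_weakI) auto
    show "eventually (\<lambda>F. dist (\<Sum>e\<in>F. ip x e * ip e y) (ip x y) < \<epsilon>) (finite_subsets_at_top E)"
      using ev ev2
    proof (eventually_elim)
      case (elim F)
      then have F: "finite F" "F \<subseteq> E" by auto
      define p where "p = (\<Sum>e\<in>F. smul (ip x e) e)"
      have r: "Re (ip (x - p) (x - p)) = Re (ip x x) - sum f F"
        unfolding p_def f_def by (rule bessel_id(2)[OF O F])
      have "sum f F \<le> Re (ip x x)" unfolding f_def by (rule bessel[OF O F])
      then have "Re (ip (x - p) (x - p)) < \<delta>" using elim(1) r by (simp add: dist_real_def)
      then have "(hnorm ip (x - p))^2 < (\<epsilon> / (hy + 1))^2" unfolding hnorm_sq \<delta>_def .
      then have hp: "hnorm ip (x - p) < \<epsilon> / (hy + 1)"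
        using ep hy0 by (simp add: power_less_imp_less_base)
      have "dist (\<Sum>e\<in>F. ip x e * ip e y) (ip x y) = cmod (ip (x - p) y)"
        unfolding p_def bessel_id(1)[OF O F] dist_complex_def by (simp add: norm_minus_commute)
      also have "\<dots> \<le> hnorm ip (x - p) * hy" unfolding hy_def by (rule cs)
      also have "\<dots> \<le> \<epsilon> / (hy + 1) * hy" by (rule mult_right_mono[OF less_imp_le[OF hp] hy0])
      also have "\<dots> < \<epsilon>" using ep hy0 by (simp add: field_simps)
      finally show ?case .
    qed
  qed
qed

end



context hs begin

lemma para: "Re (ip (a - b) (a - b)) \<le> 2 * Re (ip a a) + 2 * Re (ip b b)"
proof -
  have "Re (ip (a - b) (a - b)) + Re (ip (a + b) (a + b)) = 2 * Re (ip a a) + 2 * Re (ip b b)"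
    by (simp add: ip_diff_left ip_diff_right ip_add_left ip_add_right)
  then show ?thesis using ip_self_Re[of "a + b"] by linarith
qed

lemma hs_prod_summable:
  assumes B: "onb ip E" and K: "(\<lambda>e. (hnorm ip (K e))^2) summable_on E"
  shows "(\<lambda>(e, f). (cmod (ip (K e) f))^2) summable_on (E \<times> E)"
proof -
  have "(\<lambda>p. (cmod (ip (K (fst p)) (snd p)))^2) summable_on Sigma E (\<lambda>_. E)"
  proof (rule summable_on_SigmaI)
    fix e assume "e \<in> E"
    show "((\<lambda>f. (cmod (ip (K (fst (e, f))) (snd (e, f))))^2) has_sum (hnorm ip (K e))^2) E"
      using parseval_norm[OF B, of "K e"] by (simp add: hnorm_sq)
  next
    show "(\<lambda>e. (hnorm ip (K e))^2) summable_on E" by (rule K)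
  qed auto
  then show ?thesis by (simp add: case_prod_unfold)
qed

lemma sqrt_unique:
  assumes B: "onb ip E" and P: "positive_op smul ip P" and Q: "positive_op smul ip Q"
    and PQ: "\<And>v. P (P v) = Q (Q v)"
    and tr: "(\<lambda>e. Re (ip (Q e) e)) summable_on E"
  shows "P v = Q v"
proof -
  have BP: "bounded_op smul ip P" and BQ: "bounded_op smul ip Q" using P Q by (auto intro: pos_bop)
  obtain C0 where C0: "\<And>x. hnorm ip (Q x) \<le> C0 * hnorm ip x" using bop_bound[OF BQ] by blast
  define C where "C = \<bar>C0\<bar>"
  have C: "hnorm ip (Q x) \<le> C * hnorm ip x" for x
    using order_trans[OF C0[of x] mult_right_mono[OF abs_ge_self hnorm_nonneg]] unfolding C_def .
  have C0': "C \<ge> 0" unfolding C_def by simp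
  have qq: "(hnorm ip (Q e))^2 \<le> C * Re (ip (Q e) e)" for e
  proof -
    define a where "a = (hnorm ip (Q e))^2"
    have a0: "a \<ge> 0" unfolding a_def by simp
    have "ip (Q e) (Q e) = complex_of_real a" unfolding a_def hnorm_sq by (rule ip_self_real)
    then have ca: "cmod (ip (Q e) (Q e)) = a" using a0 by simp
    have "Re (ip (Q (Q e)) (Q e)) \<le> cmod (ip (Q (Q e)) (Q e))" by (rule complex_Re_le_cmod)
    also have "\<dots> \<le> hnorm ip (Q (Q e)) * hnorm ip (Q e)" by (rule cs)
    also have "\<dots> \<le> C * hnorm ip (Q e) * hnorm ip (Q e)"
      by (rule mult_right_mono[OF C hnorm_nonneg])
    also have "\<dots> = C * a" unfolding a_def by (simp add: power2_eq_square)
    finally have r2: "Re (ip (Q (Q e)) (Q e)) \<le> C * a" .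
    have r1: "Re (ip (Q e) e) \<ge> 0" by (rule pos_Re[OF Q])
    have "a^2 \<le> Re (ip (Q e) e) * Re (ip (Q (Q e)) (Q e))"
      using pos_cs[OF Q, of e "Q e"] ca by simp
    also have "\<dots> \<le> Re (ip (Q e) e) * (C * a)" by (rule mult_left_mono[OF r2 r1])
    finally have "a * a \<le> (C * Re (ip (Q e) e)) * a" by (simp add: power2_eq_square algebra_simps)
    then have "a \<le> C * Re (ip (Q e) e)" if "a > 0" using that by simp
    moreover have "0 \<le> C * Re (ip (Q e) e)" using C0' r1 by simp
    ultimately show ?thesis unfolding a_def[symmetric] using a0 by fastforce
  qed
  have hsQ: "(\<lambda>e. (hnorm ip (Q e))^2) summable_on E"
    by (rule summable_on_comparison_test[OF summable_on_cmult_right[OF tr, of C]]) (auto simp: qq)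
  have Pn: "(hnorm ip (P x))^2 = (hnorm ip (Q x))^2" for x
  proof -
    have "ip (P x) (P x) = ip (P (P x)) x" by (simp add: pos_sa[OF P])
    also have "\<dots> = ip (Q (Q x)) x" by (simp add: PQ)
    also have "\<dots> = ip (Q x) (Q x)" by (simp add: pos_sa[OF Q])
    finally show ?thesis unfolding hnorm_sq by simp
  qed
  define T where "T x = P x - Q x" for x
  have Tsa: "ip (T x) y = ip x (T y)" for x y
    unfolding T_def by (simp add: ip_diff_left ip_diff_right pos_sa[OF P] pos_sa[OF Q])
  have Tn: "(hnorm ip (T x))^2 \<le> 4 * (hnorm ip (Q x))^2" for x
    using para[of "P x" "Q x"] Pn[of x] unfolding T_def hnorm_sq by simp
  have key: "P (T x) = - T (Q x)" for x
    unfolding T_def by (simp add: bop_diff[OF BP] PQ)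
  have hsT: "(\<lambda>e. (hnorm ip (T e))^2) summable_on E"
    by (rule summable_on_comparison_test[OF summable_on_cmult_right[OF hsQ, of 4]]) (auto simp: Tn)
  have TQn: "(hnorm ip (T (Q e)))^2 \<le> (4 * C^2) * (hnorm ip (Q e))^2" for e
  proof -
    have "(hnorm ip (T (Q e)))^2 \<le> 4 * (hnorm ip (Q (Q e)))^2" by (rule Tn)
    also have "(hnorm ip (Q (Q e)))^2 \<le> (C * hnorm ip (Q e))^2"
      by (rule power_mono[OF C hnorm_nonneg])
    finally show ?thesis by (simp add: power_mult_distrib)
  qed
  have hsTQ: "(\<lambda>e. (hnorm ip (T (Q e)))^2) summable_on E"
    by (rule summable_on_comparison_test[OF summable_on_cmult_right[OF hsQ, of "4 * C^2"]]) (auto simp: TQn)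
  define g where "g = (\<lambda>(e, f). ip (T (Q e)) f * ip f (T e))"
  have s1: "(\<lambda>(e, f). (cmod (ip (T (Q e)) f))^2) summable_on (E \<times> E)"
    by (rule hs_prod_summable[OF B hsTQ])
  have s2: "(\<lambda>(e, f). (cmod (ip (T e) f))^2) summable_on (E \<times> E)"
    by (rule hs_prod_summable[OF B hsT])
  have gabs: "(\<lambda>p. norm (g p)) summable_on (E \<times> E)"
  proof (rule summable_on_comparison_test)
    show "(\<lambda>p. (1/2) * ((\<lambda>(e, f). (cmod (ip (T (Q e)) f))^2) p + (\<lambda>(e, f). (cmod (ip (T e) f))^2) p)) summable_on (E \<times> E)"
      by (intro summable_on_cmult_right summable_on_add s1 s2)
  next
    fix p assume "p \<in> E \<times> E"
    obtain e f where p: "p = (e, f)" by fastforce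
    have "cmod (ip f (T e)) = cmod (ip (T e) f)" by (subst ip_sym) (rule complex_mod_cnj)
    moreover have "cmod a * cmod b \<le> (1/2) * ((cmod a)^2 + (cmod b)^2)" for a b
      using sum_squares_bound[of "cmod a" "cmod b"] by (simp add: algebra_simps power2_eq_square)
    ultimately show "norm (g p) \<le> (1/2) * ((\<lambda>(e, f). (cmod (ip (T (Q e)) f))^2) p + (\<lambda>(e, f). (cmod (ip (T e) f))^2) p)"
      unfolding p g_def by (simp add: norm_mult)
  qed auto
  have gs: "g summable_on (E \<times> E)" using gabs by (rule abs_summable_summable)
  define S where "S = infsum g (E \<times> E)"
  have gS: "(g has_sum S) (E \<times> E)" unfolding S_def using gs by (rule has_sum_infsum)
  have h1: "((\<lambda>e. ip (T (Q e)) (T e)) has_sum S) E"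
  proof (rule has_sum_SigmaD[where B="\<lambda>_. E"])
    show "(g has_sum S) (Sigma E (\<lambda>_. E))" using gS by simp
    fix e assume "e \<in> E"
    show "((\<lambda>f. g (e, f)) has_sum ip (T (Q e)) (T e)) E"
      unfolding g_def using parseval[OF B, of "T (Q e)" "T e"] by simp
  qed
  have gS': "((\<lambda>(f, e). g (e, f)) has_sum S) (E \<times> E)" using gS by (subst (asm) has_sum_swap)
  have h2: "((\<lambda>f. ip (T f) (Q (T f))) has_sum S) E"
  proof (rule has_sum_SigmaD[where B="\<lambda>_. E"])
    show "((\<lambda>(f, e). g (e, f)) has_sum S) (Sigma E (\<lambda>_. E))" using gS' by simp
    fix f assume "f \<in> E"
    have eq: "(case (f, e) of (f, e) \<Rightarrow> g (e, f)) = ip (T f) e * ip e (Q (T f))" for e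
    proof -
      have "ip (T (Q e)) f = ip e (Q (T f))" by (simp add: Tsa pos_sa[OF Q])
      moreover have "ip f (T e) = ip (T f) e" by (simp add: Tsa)
      ultimately show ?thesis unfolding g_def by (simp add: mult.commute)
    qed
    show "((\<lambda>e. case (f, e) of (f, e) \<Rightarrow> g (e, f)) has_sum ip (T f) (Q (T f))) E"
      unfolding eq using parseval[OF B, of "T f" "Q (T f)"] .
  qed
  define u where "u e = Re (ip (P (T e)) (T e))" for e
  define w where "w e = Re (ip (Q (T e)) (T e))" for e
  have u0: "u e \<ge> 0" for e unfolding u_def by (rule pos_Re[OF P])
  have w0: "w e \<ge> 0" for e unfolding w_def by (rule pos_Re[OF Q])
  have hu: "(u has_sum (- Re S)) E"
  proof -
    have "((\<lambda>e. Re (ip (T (Q e)) (T e))) has_sum Re S) E" using has_sum_Re[OF h1] .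
    then have "((\<lambda>e. - Re (ip (T (Q e)) (T e))) has_sum (- Re S)) E" by (simp add: has_sum_uminus)
    then show ?thesis unfolding u_def key by simp
  qed
  have hw: "(w has_sum Re S) E"
  proof -
    have "((\<lambda>f. Re (ip (T f) (Q (T f)))) has_sum Re S) E" using has_sum_Re[OF h2] .
    moreover have "Re (ip (T f) (Q (T f))) = w f" for f
      unfolding w_def by (subst ip_sym) simp
    ultimately show ?thesis by simp
  qed
  have huw: "((\<lambda>e. u e + w e) has_sum 0) E" using has_sum_add[OF hu hw] by simp
  have Te0: "T e = 0" if e: "e \<in> E" for e
  proof -
    have "u e + w e = 0" by (rule nonneg_has_sum_le_0D[OF huw]) (auto simp: u0 w0 add_nonneg_nonneg e)
    then have "u e = 0" "w e = 0" using u0[of e] w0[of e] by auto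
    then have "P (T e) = 0" "Q (T e) = 0" unfolding u_def w_def by (auto intro: pos_zero[OF P] pos_zero[OF Q])
    then have TT: "T (T e) = 0" unfolding T_def by simp
    have "ip (T e) (T e) = ip (T (T e)) e" by (simp add: Tsa)
    then have "ip (T e) (T e) = 0" using TT by simp
    then show ?thesis by (rule ip_self_eq0)
  qed
  have "ip (T v) y = 0" for y
  proof -
    have h: "((\<lambda>e. ip v e * ip e (T y)) has_sum ip v (T y)) E" by (rule parseval[OF B])
    have z: "((\<lambda>e. ip v e * ip e (T y)) has_sum 0) E"
    proof (rule has_sum_0)
      fix e assume "e \<in> E"
      then have "ip e (T y) = 0" using Te0 Tsa[of e y] by simp
      then show "ip v e * ip e (T y) = 0" by simp
    qed
    have "ip v (T y) = 0" by (rule has_sum_unique[OF h z])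
    then show ?thesis by (simp add: Tsa)
  qed
  then have "T v = 0" by (intro ext_ip) simp
  then show ?thesis unfolding T_def by simp
qed

end



context hs begin

lemma main_bound:
  fixes c :: "'x \<Rightarrow> 'h \<Rightarrow> complex" and w :: "'x \<Rightarrow> 'h" and M :: "'x measure"
  assumes O: "orthonormal E" and F: "finite F" "F \<subseteq> E"
    and A: "positive_op smul ip A"
    and cint: "\<And>u1 u2. integrable M (\<lambda>x. c x u1 * cnj (c x u2))"
    and cval: "\<And>u1 u2. (\<integral>x. c x u1 * cnj (c x u2) \<partial>M) = ip u1 u2"
    and w: "\<And>x u. ip (w x) u = cnj (c x u)"
    and intA: "integrable M (\<lambda>x. ip (A (w x)) (w x))"
  shows "(\<Sum>e\<in>F. Re (ip (A e) e)) \<le> Re (\<integral>x. ip (A (w x)) (w x) \<partial>M)"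
proof -
  have BA: "bounded_op smul ip A" using A by (rule pos_bop)
  define t1 where "t1 x = (\<Sum>e\<in>F. c x (A e) * cnj (c x e))" for x
  define t2 where "t2 x = (\<Sum>e\<in>F. c x e * cnj (c x (A e)))" for x
  define t3 where "t3 x = (\<Sum>e\<in>F. \<Sum>e'\<in>F. (c x e' * cnj (c x e)) * ip (A e) e')" for x
  define p where "p x = (\<Sum>e\<in>F. smul (ip (w x) e) e)" for x
  define g where "g x = ip (A (w x - p x)) (w x - p x)" for x
  have gexp: "g x = ip (A (w x)) (w x) - t2 x - t1 x + t3 x" for x
  proof -
    have AP: "A (p x) = (\<Sum>e\<in>F. smul (ip (w x) e) (A e))"
      unfolding p_def by (simp add: bop_sum[OF BA] bop_smul[OF BA])
    have e1: "ip (A (w x)) (p x) = t2 x"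
      unfolding p_def t2_def ip_sum_right
    proof (intro sum.cong refl)
      fix e
      have "ip (A (w x)) e = cnj (c x (A e))" by (simp add: pos_sa[OF A] w)
      then show "ip (A (w x)) (smul (ip (w x) e) e) = c x e * cnj (c x (A e))" by (simp add: w)
    qed
    have e2: "ip (A (p x)) (w x) = t1 x"
      unfolding AP t1_def ip_sum_left
    proof (intro sum.cong refl)
      fix e
      have "ip (A e) (w x) = c x (A e)" by (subst ip_sym) (simp add: w)
      then show "ip (smul (ip (w x) e) (A e)) (w x) = c x (A e) * cnj (c x e)" by (simp add: w mult.commute)
    qed
    have e3: "ip (A (p x)) (p x) = t3 x"
      unfolding AP t3_def ip_sum_left
    proof (intro sum.cong refl)
      fix e
      show "ip (smul (ip (w x) e) (A e)) (p x) = (\<Sum>e'\<in>F. (c x e' * cnj (c x e)) * ip (A e) e')"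
        unfolding p_def ip_sum_right ip_smul_left sum_distrib_left
      proof (intro sum.cong refl)
        fix e'
        show "ip (w x) e * ip (A e) (smul (ip (w x) e') e') = (c x e' * cnj (c x e)) * ip (A e) e'"
          by (simp add: w)
      qed
    qed
    have "g x = ip (A (w x)) (w x) - ip (A (w x)) (p x) - (ip (A (p x)) (w x) - ip (A (p x)) (p x))"
      unfolding g_def by (simp add: bop_diff[OF BA] ip_diff_left ip_diff_right)
    then show ?thesis unfolding e1 e2 e3 by simp
  qed
  have i1: "integrable M t1" unfolding t1_def by (rule Bochner_Integration.integrable_sum) (rule cint)
  have i2: "integrable M t2" unfolding t2_def by (intro Bochner_Integration.integrable_sum cint)
  have i3: "integrable M t3" unfolding t3_def by (intro Bochner_Integration.integrable_sum Bochner_Integration.integrable_mult_left cint)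
  have v1: "integral\<^sup>L M t1 = (\<Sum>e\<in>F. ip (A e) e)"
    unfolding t1_def by (simp add: Bochner_Integration.integral_sum cint cval)
  have v2: "integral\<^sup>L M t2 = (\<Sum>e\<in>F. ip e (A e))"
    unfolding t2_def by (simp add: Bochner_Integration.integral_sum cint cval)
  have v3: "integral\<^sup>L M t3 = (\<Sum>e\<in>F. ip (A e) e)"
  proof -
    have "integral\<^sup>L M t3 = (\<Sum>e\<in>F. \<Sum>e'\<in>F. ip e' e * ip (A e) e')"
      unfolding t3_def by (simp add: Bochner_Integration.integral_sum cint cval)
    also have "\<dots> = (\<Sum>e\<in>F. ip (A e) e)"
    proof (intro sum.cong refl)
      fix e assume e: "e \<in> F"
      have "(\<Sum>e'\<in>F. ip e' e * ip (A e) e') = (\<Sum>e'\<in>F. ip (A e) e' * ip e' e)"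
        by (simp add: mult.commute)
      also have "\<dots> = ip (A e) e" by (rule on_coeff[OF O F e])
      finally show "(\<Sum>e'\<in>F. ip e' e * ip (A e) e') = ip (A e) e" .
    qed
    finally show ?thesis .
  qed
  have gfun: "g = (\<lambda>x. ip (A (w x)) (w x) - t2 x - t1 x + t3 x)" using gexp by auto
  have ig: "integrable M g" unfolding gfun using intA i1 i2 i3 by auto
  have Ig: "integral\<^sup>L M g = (\<integral>x. ip (A (w x)) (w x) \<partial>M) - (\<Sum>e\<in>F. ip e (A e))"
    unfolding gfun using intA i1 i2 i3 v1 v2 v3 by simp
  have "Re (integral\<^sup>L M g) = (\<integral>x. Re (g x) \<partial>M)"
    using has_bochner_integral_integral_eq[OF has_bochner_integral_Re[OF has_bochner_integral_integrable[OF ig]]]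
    by simp
  also have "\<dots> \<ge> 0" unfolding g_def by (intro Bochner_Integration.integral_nonneg pos_Re[OF A])
  finally have "0 \<le> Re (\<integral>x. ip (A (w x)) (w x) \<partial>M) - (\<Sum>e\<in>F. Re (ip e (A e)))"
    unfolding Ig by simp
  moreover have "Re (ip e (A e)) = Re (ip (A e) e)" for e by (subst ip_sym) simp
  ultimately show ?thesis by simp
qed

lemma abs_op_eq:
  assumes Q: "positive_op smul ip Q" and B: "onb ip E"
    and tr: "(\<lambda>e. Re (ip (Q e) e)) summable_on E"
  shows "abs_op smul ip Q = Q"
proof -
  have aq: "adj ip Q = Q" by (rule adj_sa[OF pos_sa[OF Q]])
  show ?thesis unfolding abs_op_def aq
  proof (rule the_equality)
    show "positive_op smul ip Q \<and> Q \<circ> Q = Q \<circ> Q" using Q by simp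
  next
    fix P assume P: "positive_op smul ip P \<and> P \<circ> P = Q \<circ> Q"
    have PQ: "P (P v) = Q (Q v)" for v using fun_cong[OF conjunct2[OF P], of v] by simp
    show "P = Q"
    proof
      fix v show "P v = Q v" by (rule sqrt_unique[OF B conjunct1[OF P] Q PQ tr])
    qed
  qed
qed

lemma hnorm_sq_le: "(hnorm ip a)^2 \<le> (C * hnorm ip b)^2 \<Longrightarrow> C \<ge> 0 \<Longrightarrow> hnorm ip a \<le> C * hnorm ip b"
  by (erule power2_le_imp_le) (rule mult_nonneg_nonneg[OF _ hnorm_nonneg])

lemma rank1_props:
  assumes B: "onb ip E" and ph: "ip \<phi> \<phi> = 1"
  defines "B0 \<equiv> (\<lambda>v. smul (ip v \<phi>) \<phi>)"
  shows "positive_op smul ip B0" and "trace_class smul ip B0"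
proof -
  have bop: "bounded_op smul ip B0" unfolding bounded_op_def
  proof (intro conjI allI exI)
    fix x y show "B0 (x + y) = B0 x + B0 y" unfolding B0_def by (simp add: ip_add_left smul_add_left)
  next
    fix a x show "B0 (smul a x) = smul a (B0 x)" unfolding B0_def by simp
  next
    fix x show "hnorm ip (B0 x) \<le> 1 * hnorm ip x"
    proof (rule hnorm_sq_le)
      have "ip (B0 x) (B0 x) = ip x \<phi> * cnj (ip x \<phi>)" unfolding B0_def using ph by simp
      then have "(hnorm ip (B0 x))^2 = (cmod (ip x \<phi>))^2"
        unfolding hnorm_sq by (simp only: complex_mult_cnj Re_complex_of_real cmod_power2)
      also have "\<dots> \<le> Re (ip x x) * Re (ip \<phi> \<phi>)" by (rule cs_sq)
      also have "\<dots> = (1 * hnorm ip x)^2" using ph by (simp add: hnorm_sq)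
      finally show "(hnorm ip (B0 x))^2 \<le> (1 * hnorm ip x)^2" .
    qed simp
  qed
  have val: "ip (B0 v) v = complex_of_real ((cmod (ip \<phi> v))^2)" for v
  proof -
    have "ip (B0 v) v = ip v \<phi> * ip \<phi> v" unfolding B0_def by simp
    also have "ip v \<phi> = cnj (ip \<phi> v)" by (rule ip_sym)
    finally have "ip (B0 v) v = ip \<phi> v * cnj (ip \<phi> v)" by (simp add: mult.commute)
    then show ?thesis by (simp only: complex_mult_cnj cmod_power2)
  qed
  show pos: "positive_op smul ip B0" unfolding positive_op_def using bop val by simp
  have "((\<lambda>e. (cmod (ip \<phi> e))^2) has_sum Re (ip \<phi> \<phi>)) E" by (rule parseval_norm[OF B])
  then have tr: "(\<lambda>e. Re (ip (B0 e) e)) summable_on E" unfolding val by (auto simp: summable_on_def)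
  show "trace_class smul ip B0" unfolding trace_class_def abs_op_eq[OF pos B tr]
  proof (rule conjI[OF bop])
    show "\<exists>E. onb ip E \<and> (\<lambda>e. Re (ip (B0 e) e)) summable_on E"
      by (rule exI[of _ E], rule conjI[OF B tr])
  qed
qed

end



context hs begin

lemma opconv_eq:
  fixes \<phi> :: 'h
  assumes Ux: "unitary_op smul ip (U x)" and Rsa: "\<And>a b. ip (R a) b = ip a (R b)"
    and A: "positive_op smul ip A"
  defines "B0 \<equiv> (\<lambda>v. smul (ip v \<phi>) \<phi>)"
  shows "op_conv ip U R A B0 x = ip (A (R (adj ip (U x) \<phi>))) (R (adj ip (U x) \<phi>))"
proof -
  define V where "V = adj ip (U x)"
  have adjV: "ip (U x a) b = ip a (V b)" for a b unfolding V_def by (rule adj_unitary[OF Ux])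
  have adjV2: "ip (V e) z = ip e (U x z)" for e z
  proof -
    have "ip (V e) z = cnj (ip z (V e))" by (rule ip_sym)
    also have "ip z (V e) = ip (U x z) e" by (rule adjV[symmetric])
    also have "cnj (ip (U x z) e) = ip e (U x z)" by (rule ip_sym[symmetric])
    finally show ?thesis .
  qed
  define E0 where "E0 = (SOME E. onb ip E)"
  have B: "onb ip E0" unfolding E0_def by (rule someI_ex[OF onb_exists])
  define w where "w = R (V \<phi>)"
  define y where "y = U x (R (A w))"
  have tm: "ip ((B0 \<circ> (U x \<circ> (R \<circ> A \<circ> R) \<circ> V)) e) e = ip \<phi> e * ip e y" for e
  proof -
    have "ip ((B0 \<circ> (U x \<circ> (R \<circ> A \<circ> R) \<circ> V)) e) e = ip (U x (R (A (R (V e))))) \<phi> * ip \<phi> e"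
      unfolding B0_def by simp
    also have "ip (U x (R (A (R (V e))))) \<phi> = ip (R (A (R (V e)))) (V \<phi>)" by (rule adjV)
    also have "\<dots> = ip (A (R (V e))) w" unfolding w_def by (rule Rsa)
    also have "\<dots> = ip (R (V e)) (A w)" by (rule pos_sa[OF A])
    also have "\<dots> = ip (V e) (R (A w))" by (rule Rsa)
    also have "\<dots> = ip e y" unfolding y_def by (rule adjV2)
    finally show ?thesis by (simp add: mult.commute)
  qed
  have "op_conv ip U R A B0 x = infsum (\<lambda>e. ip ((B0 \<circ> (U x \<circ> (R \<circ> A \<circ> R) \<circ> V)) e) e) E0"
    unfolding op_conv_def trace_def Let_def E0_def V_def ..
  also have "\<dots> = infsum (\<lambda>e. ip \<phi> e * ip e y) E0" unfolding tm ..
  also have "\<dots> = ip \<phi> y" by (rule infsumI[OF parseval[OF B]])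
  also have "ip \<phi> y = cnj (ip y \<phi>)" by (rule ip_sym)
  also have "ip y \<phi> = ip (R (A w)) (V \<phi>)" unfolding y_def by (rule adjV)
  also have "\<dots> = ip (A w) w" unfolding w_def by (rule Rsa)
  also have "cnj (ip (A w) w) = ip (A w) w"
    using pos_Im[OF A, of w] by (simp add: complex_eq_iff)
  finally show ?thesis unfolding w_def V_def .
qed

end

lemma heis_f1: "heis_setting smul ip m U R M \<Longrightarrow> hilbert_space smul ip"
  unfolding heis_setting_def by (elim conjE) assumption
lemma heis_f2: "heis_setting smul ip m U R M \<Longrightarrow> \<forall>x. unitary_op smul ip (U x)"
  unfolding heis_setting_def by (elim conjE) assumption
lemma heis_f3: "heis_setting smul ip m U R M \<Longrightarrow> \<forall>\<phi>1 \<psi>1 \<phi>2 \<psi>2.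
        integrable M (\<lambda>x. ip (U x \<phi>1) \<psi>1 * cnj (ip (U x \<phi>2) \<psi>2)) \<and>
        (\<integral>x. ip (U x \<phi>1) \<psi>1 * cnj (ip (U x \<phi>2) \<psi>2) \<partial>M) = ip \<phi>1 \<phi>2 * cnj (ip \<psi>1 \<psi>2)"
  unfolding heis_setting_def by (elim conjE) assumption
lemma heis_f4: "heis_setting smul ip m U R M \<Longrightarrow> unitary_op smul ip R"
  unfolding heis_setting_def by (elim conjE) assumption
lemma heis_f5: "heis_setting smul ip m U R M \<Longrightarrow> selfadjoint_op smul ip R"
  unfolding heis_setting_def by (elim conjE) assumption

theorem lemma5p4:
  fixes smul :: "complex \<Rightarrow> 'h::ab_group_add \<Rightarrow> 'h"
    and ip :: "'h \<Rightarrow> 'h \<Rightarrow> complex"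
    and m :: "'x::{topological_ab_group_add,t2_space} \<Rightarrow> 'x \<Rightarrow> complex"
    and U :: "'x \<Rightarrow> 'h \<Rightarrow> 'h" and R :: "'h \<Rightarrow> 'h" and M :: "'x measure"
    and A :: "'h \<Rightarrow> 'h"
  assumes "heis_setting smul ip m U R M"
    and "positive_op smul ip A"
    and "\<And>B. trace_class smul ip B \<Longrightarrow> positive_op smul ip B \<Longrightarrow> integrable M (op_conv ip U R A B)"
  shows "trace_class smul ip A"
proof -
  note hf = heis_f1[OF assms(1)] heis_f2[OF assms(1)] heis_f3[OF assms(1)] heis_f4[OF assms(1)] heis_f5[OF assms(1)]
  interpret hs smul ip by (unfold_locales) (rule hf(1))
  have A: "positive_op smul ip A" by (rule assms(2))
  have Uu: "unitary_op smul ip (U x)" for x using hf(2) by simp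
  have moyal_int: "integrable M (\<lambda>x. ip (U x a) b * cnj (ip (U x c) d))" for a b c d
    using hf(3) by simp
  have moyal_val: "(\<integral>x. ip (U x a) b * cnj (ip (U x c) d) \<partial>M) = ip a c * cnj (ip b d)" for a b c d
    using hf(3) by simp
  have Rsa: "ip (R a) b = ip a (R b)" for a b using hf(5) unfolding selfadjoint_op_def by simp
  have Riso: "ip (R a) (R b) = ip a b" for a b using hf(4) unfolding unitary_op_def by simp
  define E where "E = (SOME E. onb ip E)"
  have B: "onb ip E" unfolding E_def by (rule someI_ex[OF onb_exists])
  have O: "orthonormal E" using B by (rule onb_orthonormal)
  have bound: "\<exists>K. \<forall>F. finite F \<and> F \<subseteq> E \<longrightarrow> (\<Sum>e\<in>F. Re (ip (A e) e)) \<le> K"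
  proof (cases "E = {}")
    case True
    show ?thesis by (rule exI[of _ 0]) (simp add: True)
  next
    case False
    then obtain \<phi> where phE: "\<phi> \<in> E" by blast
    have ph: "ip \<phi> \<phi> = 1" by (rule on_norm[OF O phE])
    define B0 where "B0 = (\<lambda>v. smul (ip v \<phi>) \<phi>)"
    have B0pos: "positive_op smul ip B0" unfolding B0_def by (rule rank1_props(1)[OF B ph])
    have B0tr: "trace_class smul ip B0" unfolding B0_def by (rule rank1_props(2)[OF B ph])
    have intB: "integrable M (op_conv ip U R A B0)" by (rule assms(3)[OF B0tr B0pos])
    define w where "w x = R (adj ip (U x) \<phi>)" for x
    define c where "c x u = ip (U x (R u)) \<phi>" for x u
    have oc: "op_conv ip U R A B0 = (\<lambda>x. ip (A (w x)) (w x))"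
    proof
      fix x show "op_conv ip U R A B0 x = ip (A (w x)) (w x)"
        unfolding B0_def w_def by (rule opconv_eq[OF Uu Rsa A])
    qed
    have intA: "integrable M (\<lambda>x. ip (A (w x)) (w x))" using intB unfolding oc .
    have cint: "integrable M (\<lambda>x. c x u1 * cnj (c x u2))" for u1 u2
      unfolding c_def by (rule moyal_int)
    have cval: "(\<integral>x. c x u1 * cnj (c x u2) \<partial>M) = ip u1 u2" for u1 u2
      unfolding c_def moyal_val Riso ph by simp
    have wc: "ip (w x) u = cnj (c x u)" for x u
    proof -
      have "ip (w x) u = ip (adj ip (U x) \<phi>) (R u)" unfolding w_def by (rule Rsa)
      also have "\<dots> = cnj (ip (R u) (adj ip (U x) \<phi>))" by (rule ip_sym)
      also have "ip (R u) (adj ip (U x) \<phi>) = ip (U x (R u)) \<phi>" by (rule adj_unitary[OF Uu, symmetric])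
      finally show ?thesis unfolding c_def .
    qed
    show ?thesis
    proof (intro exI allI impI)
      fix F assume F: "finite F \<and> F \<subseteq> E"
      show "(\<Sum>e\<in>F. Re (ip (A e) e)) \<le> Re (\<integral>x. ip (A (w x)) (w x) \<partial>M)"
        by (rule main_bound[OF O conjunct1[OF F] conjunct2[OF F] A cint cval wc intA])
    qed
  qed
  then obtain K where K: "\<And>F. finite F \<Longrightarrow> F \<subseteq> E \<Longrightarrow> (\<Sum>e\<in>F. Re (ip (A e) e)) \<le> K" by blast
  have summ: "(\<lambda>e. Re (ip (A e) e)) summable_on E"
  proof (rule nonneg_bdd_above_summable_on)
    show "0 \<le> Re (ip (A e) e)" for e by (rule pos_Re[OF A])
    show "bdd_above (sum (\<lambda>e. Re (ip (A e) e)) ` {F. F \<subseteq> E \<and> finite F})"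
      by (rule bdd_aboveI[where M=K]) (use K in blast)
  qed
  have aA: "abs_op smul ip A = A" by (rule abs_op_eq[OF A B summ])
  show ?thesis unfolding trace_class_def aA
  proof (rule conjI[OF pos_bop[OF A]])
    show "\<exists>E. onb ip E \<and> (\<lambda>e. Re (ip (A e) e)) summable_on E"
      by (rule exI[of _ E], rule conjI[OF B summ])
  qed
qed


end
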